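(* Let $\mathbf z=(z_i)_{i=1}^N$ be a centered infinitesimally rigid crystal and $\mathbf x\in\mathcal M_\infty(\bar c(\mathbf z))$. Then for $1\le\gamma\le d$ and $1\le i\le N$, $$\frac{\partial\theta}{\partial x_i^\gamma}(\mathbf x)=\theta(\mathbf x)\{\mathrm{Proj}\circ(Q(\mathbf x)\theta(\mathbf x))\}^{-1}\mathrm{Proj}\{(\theta(\mathbf x)^{-1}\mathbf e_\gamma)\otimes z_i\},$$ where $\{\mathrm{Proj}\circ(Q(\mathbf x)\theta(\mathbf x))\}^{-1}$ denotes the inverse of the linear map $\mathfrak{so}(d)\ni X\mapsto\mathrm{Proj}(Q(\mathbf x)\theta(\mathbf x)X)\in\mathfrak{so}(d)$.
   Context: Let $d\ge1$, $U\in C^3_0(\mathbb R)$ even with unique $a>0$ with $U(a)=\min_{r\ge0}U(r)$ and $\check c:=U''(a)>0$; $b=\inf\{r>0:U(s)=0\ \forall s>r\}$. A crystal is $\mathbf z=(z_i)_{i=1}^N\in(\mathbb R^d)^N$ with $|z_i-z_j|=a$ or $>b$ for $i\ne j$; pairs at distance $a$ are neighboring, $\langle i,j\rangle$; centered means $\sum_iz_i=0$. $\varphi_{\theta,\eta}(\mathbf z)=(\theta z_i+\eta)_i$ for $\theta\in SO(d),\eta\in\mathbb R^d$; $\mathcal M=\{\varphi_{\theta,\eta}(\mathbf z)\}$. $\mathcal H_{\mathbf z}=\{(Xz_i+h)_i:X\in\mathfrak{so}(d),h\in\mathbb R^d\}$; $\mathbf z$ is infinitesimally rigid if $\sum_{\langle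 i,j\rangle}(h_i-h_j,z_i-z_j)^2=0$ holds only for $\mathbf h\in\mathcal H_{\mathbf z}$. $\bar c(\mathbf z)>0$ is a constant such that every $\mathbf x$ with $\inf_{\mathbf y\in\mathcal M}\max_i|x_i-y_i|\le\bar c(\mathbf z)$ has a unique minimizer $\mathbf z(\mathbf x)\in\mathcal M$ of $\|\mathbf x-\mathbf y\|_2=(\sum_i|x_i-y_i|^2)^{1/2}$; $\mathcal M_\infty(c)=\{\mathbf x:\max_i|x_i-\mathbf z(\mathbf x)_i|\le c\}$. For such $\mathbf x$, $\theta(\mathbf x)\in SO(d)$ is defined by $\mathbf z(\mathbf x)=\varphi_{\theta(\mathbf x),\eta}(\mathbf z)$ for some $\eta$. $M(d)$ has inner product $(X,Y)=\mathrm{Tr}(X\,{}^tY)$; $\mathrm{Proj}X=(X-{}^tX)/2$ is the orthogonal projection onto $\mathfrak{so}(d)$. For $e,\tilde e\in\mathbb R^d$, $(e\otimes\tilde e)^{\alpha\beta}=e^\alpha\tilde e^\beta$; $\mathbf e_\gamma$ is the $\gamma$-th unit vector; $Q(\mathbf x)=\sum_{i=1}^Nz_i\otimes x_i$. *)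

theory Defs
  imports "HOL-Analysis.Analysis"
begin

definition C3_0 :: "(real \<Rightarrow> real) \<Rightarrow> bool" where
  "C3_0 U \<longleftrightarrow> (\<forall>r. U field_differentiable at r) \<and>
     (\<forall>r. deriv U field_differentiable at r) \<and>
     (\<forall>r. deriv (deriv U) field_differentiable at r) \<and>
     continuous_on UNIV (deriv (deriv (deriv U))) \<and>
     bounded {r. U r \<noteq> 0}"

definition crystal :: "real \<Rightarrow> real \<Rightarrow> real^'d^'n \<Rightarrow> bool" where
  "crystal a b z \<longleftrightarrow> (\<forall>i j. i \<noteq> j \<longrightarrow> dist (z$i) (z$j) = a \<or> dist (z$i) (z$j) > b)"

definition centered :: "real^'d^'n \<Rightarrow> bool" where
  "centered z \<longleftrightarrow> (\<Sum>i\<in>UNIV. z$i) = 0"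

definition SO :: "(real^'d^'d) set" where
  "SO = {R. orthogonal_matrix R \<and> det R = 1}"

definition so :: "(real^'d^'d) set" where
  "so = {X. transpose X = - X}"

definition Proj :: "real^'d^'d \<Rightarrow> real^'d^'d" where
  "Proj X = (1/2) *\<^sub>R (X - transpose X)"

definition outer :: "real^'d \<Rightarrow> real^'d \<Rightarrow> real^'d^'d" where
  "outer e f = (\<chi> \<alpha> \<beta>. e$\<alpha> * f$\<beta>)"

definition H_space :: "real^'d^'n \<Rightarrow> (real^'d^'n) set" where
  "H_space z = {h. \<exists>X\<in>so. \<exists>\<eta>. \<forall>i. h$i = X *v z$i + \<eta>}"

definition inf_rigid :: "real \<Rightarrow> real^'d^'n \<Rightarrow> bool" where
  "inf_rigid a z \<longleftrightarrow> (\<forall>h::real^'d^'n.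
     (\<Sum>(i,j)\<in>{(i,j). dist (z$i) (z$j) = a}. ((h$i - h$j) \<bullet> (z$i - z$j))\<^sup>2) = 0
       \<longrightarrow> h \<in> H_space z)"

definition phi :: "real^'d^'d \<Rightarrow> real^'d \<Rightarrow> real^'d^'n \<Rightarrow> real^'d^'n" where
  "phi R \<eta> z = (\<chi> i. R *v z$i + \<eta>)"

definition Mfd :: "real^'d^'n \<Rightarrow> (real^'d^'n) set" where
  "Mfd z = {phi R \<eta> z | R \<eta>. R \<in> SO}"

definition supdist :: "real^'d^'n \<Rightarrow> real^'d^'n \<Rightarrow> real" where
  "supdist x y = (MAX i. norm (x$i - y$i))"

text \<open>Region where the nearest point is assumed to exist uniquely.\<close>
definition zdom :: "real^'d^'n \<Rightarrow> real \<Rightarrow> (real^'d^'n) set" where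
  "zdom z c = {x. (INF y\<in>Mfd z. supdist x y) \<le> c}"

text \<open>cbar property: unique L2 (= dist on real^'d^'n) minimiser on zdom.\<close>
definition cbar_ok :: "real^'d^'n \<Rightarrow> real \<Rightarrow> bool" where
  "cbar_ok z c \<longleftrightarrow> c > 0 \<and> (\<forall>x\<in>zdom z c. \<exists>!y. y \<in> Mfd z \<and> (\<forall>y'\<in>Mfd z. dist x y \<le> dist x y'))"

definition zmin :: "real^'d^'n \<Rightarrow> real^'d^'n \<Rightarrow> real^'d^'n" where
  "zmin z x = (THE y. y \<in> Mfd z \<and> (\<forall>y'\<in>Mfd z. dist x y \<le> dist x y'))"

definition Minf :: "real^'d^'n \<Rightarrow> real \<Rightarrow> real \<Rightarrow> (real^'d^'n) set" where
  "Minf z cbar c = {x \<in> zdom z cbar. supdist x (zmin z x) \<le> c}"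

definition theta :: "real^'d^'n \<Rightarrow> real^'d^'n \<Rightarrow> real^'d^'d" where
  "theta z x = (THE R. R \<in> SO \<and> (\<exists>\<eta>. zmin z x = phi R \<eta> z))"

definition Qm :: "real^'d^'n \<Rightarrow> real^'d^'n \<Rightarrow> real^'d^'d" where
  "Qm z x = (\<Sum>i\<in>UNIV. outer (z$i) (x$i))"

definition Lmap :: "real^'d^'d \<Rightarrow> real^'d^'d \<Rightarrow> real^'d^'d" where
  "Lmap A X = Proj (A ** X)"

definition Edir :: "'n \<Rightarrow> 'd \<Rightarrow> real^'d^'n" where
  "Edir i \<gamma> = (\<chi> j. if j = i then axis \<gamma> 1 else 0)"

end

theory Submission
  imports Defs
begin



lemma minv_works:
  fixes A :: "real^'d^'d"
  assumes "invertible A"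
  shows "A ** matrix_inv A = mat 1" "matrix_inv A ** A = mat 1"
proof -
  have "\<exists>A'. A ** A' = mat 1 \<and> A' ** A = mat 1" using assms by (simp add: invertible_def)
  hence "A ** matrix_inv A = mat 1 \<and> matrix_inv A ** A = mat 1"
    unfolding matrix_inv_def by (rule someI_ex)
  thus "A ** matrix_inv A = mat 1" "matrix_inv A ** A = mat 1" by auto
qed

lemma bl_transpose: "bounded_linear (transpose :: real^'d^'d \<Rightarrow> real^'d^'d)"
  unfolding linear_conv_bounded_linear[symmetric]
  by (rule linearI) (simp_all add: transpose_def vec_eq_iff)

lemma bl_trace: "bounded_linear (trace :: real^'d^'d \<Rightarrow> real)"
  unfolding linear_conv_bounded_linear[symmetric]
  by (rule linearI) (simp_all add: trace_def sum.distrib sum_distrib_left)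

lemma bl_Proj: "bounded_linear (Proj :: real^'d^'d \<Rightarrow> real^'d^'d)"
  unfolding linear_conv_bounded_linear[symmetric]
  by (rule linearI) (simp_all add: Proj_def transpose_def vec_eq_iff algebra_simps)

lemma matrix_add_rdistrib': "((A::real^'d^'d) + B) ** C = A ** C + B ** C"
  unfolding matrix_matrix_mult_def by (simp add: vec_eq_iff sum.distrib distrib_right)

lemma matrix_diff_rdistrib': "((A::real^'d^'d) - B) ** C = A ** C - B ** C"
  unfolding matrix_matrix_mult_def by (simp add: vec_eq_iff sum_subtractf left_diff_distrib)

lemma matrix_diff_ldistrib': "(C::real^'d^'d) ** (A - B) = C ** A - C ** B"
  unfolding matrix_matrix_mult_def by (simp add: vec_eq_iff sum_subtractf right_diff_distrib)

lemma matrix_scale_l: "((c::real) *\<^sub>R (A::real^'d^'d)) ** C = c *\<^sub>R (A ** C)"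
  unfolding matrix_matrix_mult_def by (simp add: vec_eq_iff sum_distrib_left mult.assoc)

lemma matrix_scale_r: "(A::real^'d^'d) ** ((c::real) *\<^sub>R C) = c *\<^sub>R (A ** C)"
  unfolding matrix_matrix_mult_def by (simp add: vec_eq_iff sum_distrib_left mult.left_commute)

lemma bb_mult: "bounded_bilinear ((**) :: real^'d^'d \<Rightarrow> real^'d^'d \<Rightarrow> real^'d^'d)"
  unfolding bilinear_conv_bounded_bilinear[symmetric] bilinear_def
  apply (intro conjI allI)
  subgoal by (rule linearI) (rule matrix_add_ldistrib, rule matrix_scale_r)
  subgoal by (rule linearI) (rule matrix_add_rdistrib', rule matrix_scale_l)
  done

lemma mult_bound: "\<exists>K>0. \<forall>(A::real^'d^'d) (B::real^'d^'d). norm (A ** B) \<le> norm A * norm B * K"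
  by (rule bounded_bilinear.pos_bounded[OF bb_mult])

lemma Proj_bound: "\<exists>K>0. \<forall>A :: real^'d^'d. norm (Proj A) \<le> norm A * K"
  by (rule bounded_linear.pos_bounded[OF bl_Proj])

lemma trace_bound: "\<exists>K>0. \<forall>A :: real^'d^'d. norm (trace A) \<le> norm A * K"
  by (rule bounded_linear.pos_bounded[OF bl_trace])

lemma SO_norm: "R \<in> SO \<Longrightarrow> norm (R::real^'d^'d) = sqrt (real CARD('d))"
proof -
  assume "R \<in> SO"
  hence "orthogonal_matrix R" by (simp add: SO_def)
  hence r: "\<And>i. norm (R$i) = 1" using orthogonal_matrix_orthonormal_rows[of R]
    by (simp add: row_def)
  have "norm R = sqrt (\<Sum>i\<in>UNIV. (norm (R$i))\<^sup>2)" by (simp only: norm_vec_def L2_set_def)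
  thus ?thesis by (simp add: r)
qed

lemma tr_0: "transpose (0::real^'d^'d) = 0" by (simp add: transpose_def vec_eq_iff)
lemma tr_add: "transpose ((A::real^'d^'d) + B) = transpose A + transpose B" by (simp add: transpose_def vec_eq_iff)
lemma tr_diff: "transpose ((A::real^'d^'d) - B) = transpose A - transpose B" by (simp add: transpose_def vec_eq_iff)
lemma tr_scale: "transpose ((c::real) *\<^sub>R (A::real^'d^'d)) = c *\<^sub>R transpose A" by (simp add: transpose_def vec_eq_iff)
lemma tr_neg: "transpose (- (A::real^'d^'d)) = - transpose A" by (simp add: transpose_def vec_eq_iff)
lemma so_subspace: "subspace (so :: (real^'d^'d) set)"
  unfolding subspace_def so_def mem_Collect_eq
  by (simp add: tr_0 tr_add tr_scale)
lemma Proj_so: "Proj X \<in> so"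
  unfolding Proj_def so_def transpose_def by (simp add: vec_eq_iff diff_divide_distrib)
lemma Proj_transpose: "Proj (transpose X) = - Proj X"
  unfolding Proj_def transpose_def by (simp add: vec_eq_iff diff_divide_distrib)

lemma so_closed: "closed (so :: (real^'d^'d) set)"
proof -
  have "so = {X :: real^'d^'d. transpose X + X = 0}" unfolding so_def by (simp only: eq_neg_iff_add_eq_0)
  also have "closed \<dots>"
    by (rule closed_Collect_eq, rule continuous_on_add[OF linear_continuous_on[OF bl_transpose] continuous_on_id], rule continuous_on_const)
  finally show ?thesis .
qed

lemma Proj_zero_iff: "Proj X = 0 \<longleftrightarrow> transpose X = (X::real^'d^'d)"
proof -
  have "Proj X = 0 \<longleftrightarrow> X - transpose X = 0" by (simp add: Proj_def)
  thus ?thesis by auto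
qed

lemma Proj_so_id: "X \<in> so \<Longrightarrow> Proj X = (X::real^'d^'d)"
proof -
  assume "X \<in> so"
  hence "X - transpose X = 2 *\<^sub>R X" by (simp add: so_def scaleR_2)
  thus ?thesis by (simp add: Proj_def)
qed

lemma skew_quad: "X \<in> so \<Longrightarrow> v \<bullet> ((X::real^'d^'d) *v v) = 0"
proof -
  assume X: "X \<in> so"
  have "v \<bullet> (X *v v) = (transpose X *v v) \<bullet> v" by (simp add: dot_lmul_matrix)
  also have "transpose X *v v = - (X *v v)" using X
    by (simp add: so_def matrix_vector_mult_def vec_eq_iff sum_negf)
  finally have "v \<bullet> (X *v v) = - ((X *v v) \<bullet> v)" by simp
  thus ?thesis by (simp add: inner_commute)
qed

lemma skew_inv: "X \<in> so \<Longrightarrow> invertible (mat 1 - (X::real^'d^'d))"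
proof -
  assume X: "X \<in> so"
  have "\<forall>x. (mat 1 - X) *v x = 0 \<longrightarrow> x = 0"
  proof (intro allI impI)
    fix x assume "(mat 1 - X) *v x = 0"
    hence "x = X *v x" by (simp add: matrix_vector_mult_diff_rdistrib)
    hence "x \<bullet> x = x \<bullet> (X *v x)" by simp
    thus "x = 0" using skew_quad[OF X, of x] by simp
  qed
  thus ?thesis by (simp add: invertible_left_inverse matrix_left_invertible_ker)
qed

lemma so_neg: "X \<in> so \<Longrightarrow> - X \<in> so"
  by (simp add: so_def tr_neg)

lemma so_scale: "X \<in> so \<Longrightarrow> (c::real) *\<^sub>R X \<in> so"
  by (simp add: so_def tr_scale)

definition cay :: "real^'d^'d \<Rightarrow> real^'d^'d" where
  "cay X = matrix_inv (mat 1 - X) ** (mat 1 + X)"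

lemma cay_SO: "X \<in> so \<Longrightarrow> cay X \<in> SO"
proof -
  assume X: "X \<in> so"
  define W where "W = matrix_inv (mat 1 - X)"
  have W1: "W ** (mat 1 - X) = mat 1" and W2: "(mat 1 - X) ** W = mat 1"
    using minv_works[OF skew_inv[OF X]] by (auto simp: W_def)
  define C where "C = cay X"
  have C: "C = W ** (mat 1 + X)" by (simp add: C_def cay_def W_def)
  have nrm: "norm (C *v v) = norm v" for v
  proof -
    define w where "w = C *v v"
    have "(mat 1 - X) *v w = (mat 1 + X) *v v"
      by (simp add: w_def C matrix_vector_mul_assoc matrix_mul_assoc W2)
    hence "w - X *v w = v + X *v v"
      by (simp add: matrix_vector_mult_diff_rdistrib matrix_vector_mult_add_rdistrib)
    hence "w - v = X *v (w + v)" by (simp add: matrix_vector_right_distrib algebra_simps)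
    hence "(w - v) \<bullet> (w + v) = 0" using skew_quad[OF X, of "w + v"] by (simp add: inner_commute)
    hence "w \<bullet> w = v \<bullet> v" by (simp add: algebra_simps inner_commute)
    hence "(norm w)\<^sup>2 = (norm v)\<^sup>2" by (simp add: power2_norm_eq_inner)
    thus ?thesis unfolding w_def[symmetric] by (simp add: power2_eq_iff_nonneg)
  qed
  have "orthogonal_transformation ((*v) C)"
    unfolding orthogonal_transformation using nrm by (simp add: matrix_vector_mul_linear)
  hence orth: "orthogonal_matrix C"
    using orthogonal_transformation_matrix[of "(*v) C"] by (simp add: matrix_of_matrix_vector_mul)
  have "transpose (mat 1 - X) = mat 1 + X" using X
    by (simp add: tr_diff transpose_mat so_def)
  hence d1: "det (mat 1 + X) = det (mat 1 - X)" by (metis det_transpose)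
  have "det W * det (mat 1 - X) = 1" using W1 det_mul[of W "mat 1 - X"] by (simp add: det_I)
  hence "det C = 1" by (simp add: C det_mul d1)
  with orth show ?thesis by (simp add: SO_def C_def)
qed

lemma cay_eq: assumes X: "X \<in> so"
  shows "cay X + mat 1 = 2 *\<^sub>R matrix_inv (mat 1 - X)"
    "cay X - mat 1 = 2 *\<^sub>R (X + matrix_inv (mat 1 - X) ** X ** X)"
    "(mat 1 - X) ** matrix_inv (mat 1 - X) = mat 1"
    "matrix_inv (mat 1 - X) ** (mat 1 - X) = mat 1"
proof -
  define W where "W = matrix_inv (mat 1 - X)"
  have W1: "W ** (mat 1 - X) = mat 1" and W2: "(mat 1 - X) ** W = mat 1"
    using minv_works[OF skew_inv[OF X]] by (auto simp: W_def)
  have C: "cay X = W ** (mat 1 + X)" by (simp add: cay_def W_def)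
  have Wd: "W = mat 1 + W ** X" using W1 by (simp add: matrix_diff_ldistrib' algebra_simps)
  have "cay X + mat 1 = W ** (mat 1 + X) + W ** (mat 1 - X)" by (simp add: C W1)
  also have "\<dots> = W ** (2 *\<^sub>R mat 1)" by (simp add: matrix_add_ldistrib[symmetric] scaleR_2)
  finally show "cay X + mat 1 = 2 *\<^sub>R W" unfolding W_def[symmetric] by (simp add: matrix_scale_r)
  have "cay X - mat 1 = W ** (mat 1 + X) - W ** (mat 1 - X)" by (simp add: C W1)
  also have "\<dots> = W ** ((mat 1 + X) - (mat 1 - X))" by (simp only: matrix_diff_ldistrib')
  also have "(mat 1 + X) - (mat 1 - X) = 2 *\<^sub>R X" by (simp add: scaleR_2 algebra_simps)
  also have "W ** (2 *\<^sub>R X) = 2 *\<^sub>R (W ** X)" by (simp only: matrix_scale_r)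
  also have "W ** X = X + W ** X ** X"
    by (subst Wd) (simp add: matrix_add_rdistrib')
  finally show "cay X - mat 1 = 2 *\<^sub>R (X + W ** X ** X)" .
  show "(mat 1 - X) ** matrix_inv (mat 1 - X) = mat 1" "matrix_inv (mat 1 - X) ** (mat 1 - X) = mat 1"
    using W1 W2 by (auto simp: W_def)
qed

lemma cay_id: assumes X: "X \<in> so" and "cay X = mat 1" shows "X = 0"
proof -
  have "(mat 1 - X) ** cay X = mat 1 + X"
    using cay_eq(3)[OF X] by (simp add: cay_def matrix_mul_assoc)
  hence "mat 1 - X = mat 1 + X" using assms(2) by simp
  hence "2 *\<^sub>R X = 0" by (simp add: scaleR_2 algebra_simps)
  thus ?thesis by simp
qed

lemma matrix_neg_l: "(- (A::real^'d^'d)) ** C = - (A ** C)"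
  unfolding matrix_matrix_mult_def by (simp add: vec_eq_iff sum_negf)

lemma trace_scale: "trace ((c::real) *\<^sub>R (A::real^'d^'d)) = c * trace A"
  by (simp add: trace_def sum_distrib_left)

lemma mat1_SO: "(mat 1 :: real^'d^'d) \<in> SO"
  by (simp add: SO_def orthogonal_matrix_id det_I)

lemma quad_zero: assumes "\<And>t::real. t * c \<le> K * t\<^sup>2" shows "c = 0"
proof -
  define u where "u = \<bar>K\<bar> + 1"
  have u: "u > 0" by (simp add: u_def)
  have "(c / u) * c \<le> K * (c / u)\<^sup>2" by (rule assms)
  also have "\<dots> \<le> \<bar>K\<bar> * (c / u)\<^sup>2" by (intro mult_right_mono) auto
  finally have "c\<^sup>2 / u \<le> \<bar>K\<bar> * c\<^sup>2 / u\<^sup>2" by (simp add: power2_eq_square)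
  hence "c\<^sup>2 * u \<le> \<bar>K\<bar> * c\<^sup>2" using u by (simp add: field_simps power2_eq_square)
  hence "c\<^sup>2 \<le> 0" by (simp add: u_def algebra_simps)
  thus ?thesis by simp
qed

lemma fo_sym:
  fixes S :: "real^'d^'d"
  assumes S: "\<forall>M\<in>SO. trace (M ** S) \<le> trace S"
  shows "transpose S = S"
proof -
  define A where "A = transpose S - S"
  have A: "A \<in> so" by (simp add: A_def so_def tr_diff)
  obtain Km where Km: "Km > 0" "\<forall>(A::real^'d^'d) (B::real^'d^'d). norm (A ** B) \<le> norm A * norm B * Km"
    using mult_bound by blast
  obtain Kt where Kt: "Kt > 0" "\<forall>A :: real^'d^'d. norm (trace A) \<le> norm A * Kt"
    using trace_bound by blast
  define B where "B = A ** A ** S"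
  define K where "K = sqrt (real CARD('d)) * norm B * Km * Kt"
  have key: "t * trace (A ** S) \<le> K * t\<^sup>2" for t
  proof -
    define X where "X = t *\<^sub>R A"
    have X: "X \<in> so" using so_scale[OF A] by (simp add: X_def)
    define W where "W = matrix_inv (mat 1 - X)"
    have C: "cay X = mat 1 + 2 *\<^sub>R (X + W ** X ** X)"
      using cay_eq(2)[OF X] unfolding W_def by (simp add: algebra_simps)
    have WXXS: "W ** X ** X ** S = (t * t) *\<^sub>R (W ** B)"
      by (simp add: X_def B_def matrix_scale_l matrix_scale_r matrix_mul_assoc)
    have "cay X ** S = S + 2 *\<^sub>R (t *\<^sub>R (A ** S) + (t * t) *\<^sub>R (W ** B))"
      unfolding C by (simp add: matrix_add_rdistrib' matrix_scale_l WXXS[symmetric] X_def)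
    hence tr: "trace (cay X ** S) = trace S + 2 * t * trace (A ** S) + 2 * (t * t) * trace (W ** B)"
      by (simp add: trace_add trace_scale algebra_simps)
    have "trace (cay X ** S) \<le> trace S" using S cay_SO[OF X] by blast
    hence le: "t * trace (A ** S) \<le> - ((t * t) * trace (W ** B))" using tr by simp
    have nW: "norm W \<le> sqrt (real CARD('d))"
    proof -
      have "W = (1/2) *\<^sub>R (cay X + mat 1)" using cay_eq(1)[OF X] by (simp add: W_def)
      hence "norm W = (1/2) * norm (cay X + mat 1)" by simp
      also have "\<dots> \<le> (1/2) * (norm (cay X) + norm (mat 1 :: real^'d^'d))"
        by (intro mult_left_mono norm_triangle_ineq) auto
      also have "\<dots> = sqrt (real CARD('d))"
        using SO_norm[OF cay_SO[OF X]] SO_norm[OF mat1_SO] by simp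
      finally show ?thesis .
    qed
    have "\<bar>trace (W ** B)\<bar> \<le> norm (W ** B) * Kt" using Kt by (metis real_norm_def)
    also have "\<dots> \<le> (norm W * norm B * Km) * Kt" using Kt Km by (intro mult_right_mono) auto
    also have "\<dots> \<le> (sqrt (real CARD('d)) * norm B * Km) * Kt"
      using Kt Km nW by (intro mult_right_mono) auto
    finally have "\<bar>trace (W ** B)\<bar> \<le> K" by (simp add: K_def)
    hence h2: "- ((t * t) * trace (W ** B)) \<le> (t * t) * K"
      by (metis abs_le_D2 minus_mult_right mult_left_mono zero_le_square)
    have "t * trace (A ** S) \<le> (t * t) * K" using le h2 by (rule order_trans)
    thus ?thesis by (simp add: power2_eq_square mult_ac)
  qed
  have tr0: "trace (A ** S) = 0" by (rule quad_zero[OF key])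
  have e1: "trace (A ** S) = (\<Sum>i\<in>UNIV. \<Sum>k\<in>UNIV. (S$k$i - S$i$k) * S$k$i)"
    by (simp add: trace_def matrix_matrix_mult_def A_def transpose_def)
  have e2: "(\<Sum>i\<in>UNIV. \<Sum>k\<in>UNIV. (S$k$i - S$i$k) * S$i$k) = - (\<Sum>i\<in>UNIV. \<Sum>k\<in>UNIV. (S$k$i - S$i$k) * S$k$i)"
    by (subst sum.swap) (simp add: sum_negf[symmetric] algebra_simps)
  have e3: "(\<Sum>i\<in>UNIV. \<Sum>k\<in>UNIV. (S$k$i - S$i$k)\<^sup>2) = (\<Sum>i\<in>UNIV. \<Sum>k\<in>UNIV. (S$k$i - S$i$k) * S$k$i) - (\<Sum>i\<in>UNIV. \<Sum>k\<in>UNIV. (S$k$i - S$i$k) * S$i$k)"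
    by (simp add: power2_eq_square right_diff_distrib sum_subtractf)
  have sq0: "(\<Sum>i\<in>UNIV. \<Sum>k\<in>UNIV. (S$k$i - S$i$k)\<^sup>2) = 0"
    using e1 e2 e3 tr0 by simp
  have "\<forall>i\<in>UNIV. (\<Sum>k\<in>UNIV. (S$k$i - S$i$k)\<^sup>2) = 0"
    using sq0 by (subst sum_nonneg_eq_0_iff[symmetric]) (auto intro: sum_nonneg)
  hence "\<forall>i k. (S$k$i - S$i$k)\<^sup>2 = 0"
    by (auto simp: sum_nonneg_eq_0_iff)
  thus ?thesis by (simp add: vec_eq_iff transpose_def)
qed

lemma inj_L:
  fixes S X :: "real^'d^'d"
  assumes St: "transpose S = S" and U: "\<forall>M\<in>SO. trace (M ** S) = trace S \<longrightarrow> M = mat 1"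
    and X: "X \<in> so" and P: "Proj (S ** X) = 0"
  shows "X = 0"
proof -
  have "transpose (S ** X) = S ** X" using P by (simp add: Proj_zero_iff)
  moreover have "transpose (S ** X) = - (X ** S)"
    using X St by (simp add: matrix_transpose_mul so_def matrix_neg_l)
  ultimately have h: "- (X ** S) = S ** X" by simp
  have XS: "X ** S = - (S ** X)" by (simp add: h[symmetric])
  define W where "W = matrix_inv (mat 1 - X)"
  have W1: "(mat 1 - X) ** W = mat 1" using cay_eq(3)[OF X] by (simp add: W_def)
  have "cay X ** S = W ** ((mat 1 + X) ** S)" by (simp add: cay_def W_def matrix_mul_assoc)
  also have "(mat 1 + X) ** S = S ** (mat 1 - X)"
    by (simp add: matrix_add_rdistrib' matrix_diff_ldistrib' XS)
  finally have "trace (cay X ** S) = trace ((W ** S) ** (mat 1 - X))" by (simp add: matrix_mul_assoc)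
  also have "\<dots> = trace ((mat 1 - X) ** (W ** S))" by (rule trace_mul_sym)
  also have "\<dots> = trace (((mat 1 - X) ** W) ** S)" by (simp only: matrix_mul_assoc)
  also have "\<dots> = trace S" by (simp add: W1)
  finally have "cay X = mat 1" using U cay_SO[OF X] by blast
  thus ?thesis by (rule cay_id[OF X])
qed

lemma det_cont: "continuous_on UNIV (det :: real^'d^'d \<Rightarrow> real)"
  unfolding det_def
  apply (intro continuous_on_sum continuous_on_mult continuous_on_const)
  apply (rule continuous_on_prod)
  apply (rule continuous_on_component)
  apply (rule continuous_on_component)
  apply (rule continuous_on_id)
  done

lemma SO_closed: "closed (SO :: (real^'d^'d) set)"
proof -
  have "SO = {R :: real^'d^'d. transpose R ** R = mat 1} \<inter> {R. det R = 1}"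
    by (auto simp: SO_def orthogonal_matrix)
  also have "closed \<dots>"
    apply (intro closed_Int closed_Collect_eq continuous_on_const det_cont)
    apply (rule bounded_bilinear.continuous_on[OF bb_mult])
    apply (rule linear_continuous_on[OF bl_transpose])
    apply (rule continuous_on_id)
    done
  finally show ?thesis .
qed

lemma SO_compact: "compact (SO :: (real^'d^'d) set)"
proof -
  have "bounded (SO :: (real^'d^'d) set)"
    unfolding bounded_iff using SO_norm by (metis order_refl)
  thus ?thesis using SO_closed by (simp add: compact_eq_bounded_closed)
qed

lemma SO_mult: "A \<in> SO \<Longrightarrow> B \<in> SO \<Longrightarrow> (A::real^'d^'d) ** B \<in> SO"
  by (simp add: SO_def orthogonal_matrix_mul det_mul)

lemma SO_transpose: "A \<in> SO \<Longrightarrow> transpose (A::real^'d^'d) \<in> SO"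
  by (simp add: SO_def det_transpose)

lemma SO_tA: "A \<in> SO \<Longrightarrow> transpose (A::real^'d^'d) ** A = mat 1"
  by (simp add: SO_def orthogonal_matrix)

lemma SO_At: "A \<in> SO \<Longrightarrow> (A::real^'d^'d) ** transpose A = mat 1"
  by (simp add: SO_def orthogonal_matrix_def)

lemma tr_lin: "trace ((R::real^'d^'d) ** (Q0 + t *\<^sub>R Q1)) = trace (R ** Q0) + t * trace (R ** Q1)"
  by (simp add: matrix_add_ldistrib matrix_scale_r trace_add trace_scale)

lemma tr_rot: "trace ((M::real^'d^'d) ** (Q ** R)) = trace ((R ** M) ** Q)"
proof -
  have "trace (M ** (Q ** R)) = trace ((Q ** R) ** M)" by (rule trace_mul_sym)
  also have "\<dots> = trace (Q ** (R ** M))" by (simp only: matrix_mul_assoc)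
  also have "\<dots> = trace ((R ** M) ** Q)" by (rule trace_mul_sym)
  finally show ?thesis .
qed

lemma fo_max:
  fixes Q R0 :: "real^'d^'d"
  assumes R0: "R0 \<in> SO" and mx: "\<forall>R\<in>SO. trace (R ** Q) \<le> trace (R0 ** Q)"
  shows "transpose (Q ** R0) = Q ** R0"
proof (rule fo_sym, intro ballI)
  fix M :: "real^'d^'d" assume M: "M \<in> SO"
  have "trace (M ** (Q ** R0)) = trace ((R0 ** M) ** Q)" by (rule tr_rot)
  also have "\<dots> \<le> trace (R0 ** Q)" using mx SO_mult[OF R0 M] by blast
  also have "\<dots> = trace (Q ** R0)" by (rule trace_mul_sym)
  finally show "trace (M ** (Q ** R0)) \<le> trace (Q ** R0)" .
qed

lemma uniq_transf:
  fixes Q R0 :: "real^'d^'d"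
  assumes R0: "R0 \<in> SO" and u: "\<forall>R\<in>SO. trace (R ** Q) = trace (R0 ** Q) \<longrightarrow> R = R0"
  shows "\<forall>M\<in>SO. trace (M ** (Q ** R0)) = trace (Q ** R0) \<longrightarrow> M = mat 1"
proof (intro ballI impI)
  fix M :: "real^'d^'d" assume M: "M \<in> SO" and e: "trace (M ** (Q ** R0)) = trace (Q ** R0)"
  have "trace ((R0 ** M) ** Q) = trace (R0 ** Q)"
    using e tr_rot[of M Q R0] trace_mul_sym[of Q R0] by simp
  hence "R0 ** M = R0" using u SO_mult[OF R0 M] by blast
  hence "transpose R0 ** (R0 ** M) = transpose R0 ** R0" by simp
  thus "M = mat 1" by (simp add: matrix_mul_assoc SO_tA[OF R0])
qed

lemma L_bij:
  fixes S :: "real^'d^'d"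
  assumes St: "transpose S = S" and U: "\<forall>M\<in>SO. trace (M ** S) = trace S \<longrightarrow> M = mat 1"
  shows "bij_betw (\<lambda>X. Proj (S ** X)) so so"
    "\<exists>c>0. \<forall>X\<in>so. c * norm X \<le> norm (Proj (S ** X))"
proof -
  let ?L = "\<lambda>X. Proj (S ** X)"
  have bl: "bounded_linear ?L"
    by (rule bounded_linear_compose[OF bl_Proj bounded_bilinear.bounded_linear_right[OF bb_mult]])
  have lin: "linear ?L" using bl by (simp add: linear_conv_bounded_linear)
  have ker: "\<forall>X\<in>so. ?L X = 0 \<longrightarrow> X = 0" using inj_L[OF St U] by blast
  have inj: "inj_on ?L so"
  proof (rule inj_onI)
    fix X Y assume X: "X \<in> so" and Y: "Y \<in> so" and e: "?L X = ?L Y"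
    have "X - Y \<in> so" using X Y by (simp add: so_def tr_diff)
    moreover have "?L (X - Y) = 0" using e linear_diff[OF lin] by simp
    ultimately show "X = Y" using ker by auto
  qed
  have sub: "?L ` so \<subseteq> so" using Proj_so by blast
  have sp: "span so = (so :: (real^'d^'d) set)" using so_subspace by (simp add: span_eq_iff)
  have "dim (?L ` so) = dim (so :: (real^'d^'d) set)" using eucl.dim_image_eq[OF lin, of so] sp inj by simp
  hence "?L ` so = so"
    using subspace_dim_equal[OF linear_subspace_image[OF lin so_subspace] so_subspace sub] by simp
  thus "bij_betw ?L so so" using inj by (simp add: bij_betw_def)
  obtain e where "e > 0" "\<forall>X\<in>so. norm (?L X) \<ge> e * norm X"
    using injective_imp_isometric[OF so_closed so_subspace bl ker] by blast
  thus "\<exists>c>0. \<forall>X\<in>so. c * norm X \<le> norm (Proj (S ** X))" by blast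
qed

lemma bl_trace_right: "bounded_linear (\<lambda>R::real^'d^'d. trace (R ** Q))"
  by (rule bounded_linear_compose[OF bl_trace bounded_bilinear.bounded_linear_left[OF bb_mult]])

lemma tr_SO_bound: "\<exists>Kb\<ge>0. \<forall>R\<in>SO. \<bar>trace ((R::real^'d^'d) ** Q)\<bar> \<le> Kb"
proof -
  obtain Km where Km: "Km > 0" "\<forall>(A::real^'d^'d) (B::real^'d^'d). norm (A ** B) \<le> norm A * norm B * Km"
    using mult_bound by blast
  obtain Kt where Kt: "Kt > 0" "\<forall>A :: real^'d^'d. norm (trace A) \<le> norm A * Kt"
    using trace_bound by blast
  define Kb where "Kb = sqrt (real CARD('d)) * norm Q * Km * Kt"
  have "\<forall>R\<in>SO. \<bar>trace ((R::real^'d^'d) ** Q)\<bar> \<le> Kb"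
  proof
    fix R :: "real^'d^'d" assume R: "R \<in> SO"
    have "\<bar>trace (R ** Q)\<bar> \<le> norm (R ** Q) * Kt" using Kt by (metis real_norm_def)
    also have "\<dots> \<le> (norm R * norm Q * Km) * Kt" using Kt Km by (intro mult_right_mono) auto
    also have "\<dots> = Kb" using SO_norm[OF R] by (simp add: Kb_def)
    finally show "\<bar>trace (R ** Q)\<bar> \<le> Kb" .
  qed
  moreover have "Kb \<ge> 0" using Km Kt by (simp add: Kb_def)
  ultimately show ?thesis by blast
qed

lemma cont_abs:
  fixes Th :: "real \<Rightarrow> real^'d^'d" and Q0 Q1 :: "real^'d^'d" and T :: "real set"
  assumes T0: "0 \<in> T" and SOt: "\<forall>t\<in>T. Th t \<in> SO"
    and mx: "\<forall>t\<in>T. \<forall>R\<in>SO. trace (R ** (Q0 + t *\<^sub>R Q1)) \<le> trace (Th t ** (Q0 + t *\<^sub>R Q1))"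
    and un: "\<forall>R\<in>SO. trace (R ** Q0) = trace (Th 0 ** Q0) \<longrightarrow> R = Th 0"
    and e: "\<epsilon> > 0"
  shows "\<exists>\<delta>>0. \<forall>t\<in>T. \<bar>t\<bar> < \<delta> \<longrightarrow> norm (Th t - Th 0) < \<epsilon>"
proof -
  define K where "K = SO \<inter> {R. \<epsilon> \<le> norm (R - Th 0)}"
  have cK: "compact K" unfolding K_def
    by (intro compact_Int_closed SO_compact closed_Collect_le continuous_on_const
        continuous_on_norm continuous_on_diff continuous_on_id)
  show ?thesis
  proof (cases "K = {}")
    case True
    have "\<forall>t\<in>T. norm (Th t - Th 0) < \<epsilon>"
    proof
      fix t assume "t \<in> T"
      hence "Th t \<in> SO" using SOt by blast
      hence "Th t \<notin> {R. \<epsilon> \<le> norm (R - Th 0)}" using True unfolding K_def by blast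
      thus "norm (Th t - Th 0) < \<epsilon>" by simp
    qed
    thus ?thesis by (intro exI[of _ 1]) auto
  next
    case False
    define g where "g R = trace (Th 0 ** Q0) - trace (R ** Q0)" for R
    have gc: "continuous_on K g" unfolding g_def
      by (intro continuous_on_diff continuous_on_const linear_continuous_on bl_trace_right)
    obtain R0 where R0: "R0 \<in> K" "\<forall>R\<in>K. g R0 \<le> g R"
      using continuous_attains_inf[OF cK False gc] by blast
    have R0SO: "R0 \<in> SO" and R0n: "\<epsilon> \<le> norm (R0 - Th 0)" using R0(1) by (auto simp: K_def)
    have "trace (R0 ** Q0) \<le> trace (Th 0 ** Q0)" using mx T0 R0SO by fastforce
    moreover have "trace (R0 ** Q0) \<noteq> trace (Th 0 ** Q0)"
    proof
      assume "trace (R0 ** Q0) = trace (Th 0 ** Q0)"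
      hence "R0 = Th 0" using un R0SO by blast
      thus False using R0n e by simp
    qed
    ultimately have m: "g R0 > 0" by (simp add: g_def)
    obtain Kb where Kb: "Kb \<ge> 0" "\<forall>R\<in>SO. \<bar>trace ((R::real^'d^'d) ** Q1)\<bar> \<le> Kb"
      using tr_SO_bound by blast
    define \<delta> where "\<delta> = g R0 / (2 * Kb + 1)"
    have dp: "\<delta> > 0" using m Kb by (simp add: \<delta>_def)
    show ?thesis
    proof (intro exI[of _ \<delta>] conjI ballI impI dp)
      fix t assume t: "t \<in> T" "\<bar>t\<bar> < \<delta>"
      show "norm (Th t - Th 0) < \<epsilon>"
      proof (rule ccontr)
        assume "\<not> norm (Th t - Th 0) < \<epsilon>"
        hence "Th t \<in> K" using SOt t by (auto simp: K_def)
        hence le1: "g R0 \<le> g (Th t)" using R0 by blast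
        have "trace (Th 0 ** (Q0 + t *\<^sub>R Q1)) \<le> trace (Th t ** (Q0 + t *\<^sub>R Q1))"
          using mx t SOt T0 by blast
        hence "g (Th t) \<le> t * (trace (Th t ** Q1) - trace (Th 0 ** Q1))"
          by (simp add: tr_lin g_def algebra_simps)
        also have "\<dots> \<le> \<bar>t\<bar> * \<bar>trace (Th t ** Q1) - trace (Th 0 ** Q1)\<bar>"
          by (metis abs_ge_self abs_mult)
        also have "\<dots> \<le> \<bar>t\<bar> * (2 * Kb)"
        proof (rule mult_left_mono)
          have "\<bar>trace (Th t ** Q1)\<bar> \<le> Kb" "\<bar>trace (Th 0 ** Q1)\<bar> \<le> Kb" using Kb SOt t T0 by auto
          thus "\<bar>trace (Th t ** Q1) - trace (Th 0 ** Q1)\<bar> \<le> 2 * Kb" by arith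
        qed simp
        also have "\<dots> \<le> \<bar>t\<bar> * (2 * Kb + 1)" by (simp add: mult_left_mono)
        also have "\<dots> < \<delta> * (2 * Kb + 1)" using t Kb by (intro mult_strict_right_mono) auto
        also have "\<dots> = g R0" using Kb by (simp add: \<delta>_def)
        finally show False using le1 by simp
      qed
    qed
  qed
qed

lemma Proj_add: "Proj ((A::real^'d^'d) + B) = Proj A + Proj B"
  by (simp add: Proj_def tr_add algebra_simps)
lemma Proj_diff: "Proj ((A::real^'d^'d) - B) = Proj A - Proj B"
  by (simp add: Proj_def tr_diff algebra_simps)
lemma Proj_scale: "Proj ((c::real) *\<^sub>R (A::real^'d^'d)) = c *\<^sub>R Proj A"
  by (simp add: Proj_def tr_scale algebra_simps)
lemma Proj_neg: "Proj (- (A::real^'d^'d)) = - Proj A"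
  by (simp add: Proj_def tr_neg algebra_simps)

lemma key_est:
  fixes Th0 Q0 Q1 Y :: "real^'d^'d" and c :: real
  assumes Th0: "Th0 \<in> SO" and St: "transpose (Q0 ** Th0) = Q0 ** Th0"
    and Y: "Y \<in> so" and LY: "Proj ((Q0 ** Th0) ** Y) = - Proj (Q1 ** Th0)"
    and c: "c > 0" and cb: "\<forall>X\<in>so. c * norm X \<le> norm (Proj ((Q0 ** Th0) ** X))"
  shows "\<exists>K2>0. \<forall>Tht t. Tht \<in> SO \<longrightarrow>
      transpose ((Q0 + t *\<^sub>R Q1) ** Tht) = (Q0 + t *\<^sub>R Q1) ** Tht \<longrightarrow>
      norm ((transpose Th0 ** Tht - mat 1) - t *\<^sub>R Y)
        \<le> K2 * (\<bar>t\<bar> * norm (transpose Th0 ** Tht - mat 1) + (norm (transpose Th0 ** Tht - mat 1))\<^sup>2)"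
proof -
  obtain Km where Km: "Km > 0" "\<forall>(A::real^'d^'d) (B::real^'d^'d). norm (A ** B) \<le> norm A * norm B * Km"
    using mult_bound by blast
  obtain Kp where Kp: "Kp > 0" "\<forall>A :: real^'d^'d. norm (Proj A) \<le> norm A * Kp"
    using Proj_bound by blast
  obtain Ktr where Ktr: "Ktr > 0" "\<forall>A :: real^'d^'d. norm (transpose A) \<le> norm A * Ktr"
    using bounded_linear.pos_bounded[OF bl_transpose] by blast
  define nd where "nd = sqrt (real CARD('d))"
  define S0 where "S0 = Q0 ** Th0"
  define K1 where "K1 = Kp*Km*Km*norm Q1*nd + Kp*Km*norm S0*Km*Ktr"
  define K2 where "K2 = K1 / c + Km * Ktr + 1"
  have K1: "K1 \<ge> 0" using Km Kp Ktr by (simp add: K1_def nd_def)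
  have K2: "K2 > 0"
  proof -
    have "K1 / c \<ge> 0" using K1 c by simp
    moreover have "Km * Ktr > 0" using Km Ktr by simp
    ultimately show ?thesis unfolding K2_def by linarith
  qed
  have "\<forall>Tht t. Tht \<in> SO \<longrightarrow>
      transpose ((Q0 + t *\<^sub>R Q1) ** Tht) = (Q0 + t *\<^sub>R Q1) ** Tht \<longrightarrow>
      norm ((transpose Th0 ** Tht - mat 1) - t *\<^sub>R Y)
        \<le> K2 * (\<bar>t\<bar> * norm (transpose Th0 ** Tht - mat 1) + (norm (transpose Th0 ** Tht - mat 1))\<^sup>2)"
  proof (intro allI impI)
    fix Tht :: "real^'d^'d" and t :: real
    assume Tht: "Tht \<in> SO" and symt: "transpose ((Q0 + t *\<^sub>R Q1) ** Tht) = (Q0 + t *\<^sub>R Q1) ** Tht"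
    define D where "D = transpose Th0 ** Tht - mat 1"
    define X where "X = Proj D"
    define Sy where "Sy = D - X"
    have f1: "Tht = Th0 ** (mat 1 + D)"
      by (simp add: D_def matrix_mul_assoc SO_At[OF Th0])
    have f1': "Tht - Th0 = Th0 ** D" using f1 by (simp add: matrix_add_ldistrib)
    have MSO: "transpose Th0 ** Tht \<in> SO" by (rule SO_mult[OF SO_transpose[OF Th0] Tht])
    have "transpose (mat 1 + D) ** (mat 1 + D) = mat 1"
      using SO_tA[OF MSO] by (simp add: D_def)
    hence f2: "transpose D + D + transpose D ** D = 0"
      by (simp add: tr_add transpose_mat matrix_add_ldistrib matrix_add_rdistrib' algebra_simps)
    have "Sy = (1/2) *\<^sub>R (D + transpose D)"
      by (simp add: Sy_def X_def Proj_def vec_eq_iff transpose_def field_simps)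
    also have "D + transpose D = - (transpose D ** D)" using f2 by (simp add: algebra_simps eq_neg_iff_add_eq_0)
    finally have f3: "Sy = - ((1/2) *\<^sub>R (transpose D ** D))" by simp
    have f4: "Proj ((Q0 + t *\<^sub>R Q1) ** Tht) = 0" using symt by (simp add: Proj_zero_iff)
    have f5: "(Q0 + t *\<^sub>R Q1) ** Tht = S0 + S0 ** D + t *\<^sub>R (Q1 ** Tht)"
    proof -
      have "(Q0 + t *\<^sub>R Q1) ** Tht = Q0 ** Tht + t *\<^sub>R (Q1 ** Tht)"
        by (simp add: matrix_add_rdistrib' matrix_scale_l)
      also have "Q0 ** Tht = S0 + S0 ** D"
        by (simp add: f1 S0_def matrix_mul_assoc[symmetric] matrix_add_ldistrib)
      finally show ?thesis .
    qed
    have f6: "Proj S0 = 0" using St by (simp add: Proj_zero_iff S0_def)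
    have f7: "Proj (S0 ** D) = - (t *\<^sub>R Proj (Q1 ** Tht))"
      using f4 f5 f6 by (simp add: Proj_add Proj_scale eq_neg_iff_add_eq_0)
    have f8: "Proj (S0 ** (X - t *\<^sub>R Y)) = - (t *\<^sub>R Proj (Q1 ** (Th0 ** D))) - Proj (S0 ** Sy)"
    proof -
      have "S0 ** (X - t *\<^sub>R Y) = S0 ** D - S0 ** Sy - t *\<^sub>R (S0 ** Y)"
        by (simp add: Sy_def matrix_diff_ldistrib' matrix_scale_r)
      hence e1: "Proj (S0 ** (X - t *\<^sub>R Y)) = - (t *\<^sub>R Proj (Q1 ** Tht)) - Proj (S0 ** Sy) + t *\<^sub>R Proj (Q1 ** Th0)"
        using f7 LY by (simp add: Proj_diff Proj_scale S0_def)
      have "Q1 ** Tht = Q1 ** Th0 + Q1 ** (Th0 ** D)"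
        using f1' by (metis add_diff_cancel_left' diff_add_cancel matrix_add_ldistrib)
      hence e2: "Proj (Q1 ** Tht) = Proj (Q1 ** Th0) + Proj (Q1 ** (Th0 ** D))" by (simp add: Proj_add)
      show ?thesis unfolding e1 e2 by (simp add: scaleR_add_right)
    qed
    have nD: "norm (Th0 ** D) \<le> nd * norm D * Km"
    proof -
      have "norm (Th0 ** D) \<le> norm Th0 * norm D * Km" using Km(2) by blast
      thus ?thesis using SO_norm[OF Th0] by (simp add: nd_def)
    qed
    have n1: "norm (Proj (Q1 ** (Th0 ** D))) \<le> (Kp*Km*Km*norm Q1*nd) * norm D"
    proof -
      have "norm (Proj (Q1 ** (Th0 ** D))) \<le> norm (Q1 ** (Th0 ** D)) * Kp" using Kp by blast
      also have "\<dots> \<le> (norm Q1 * norm (Th0 ** D) * Km) * Kp" using Km Kp by (intro mult_right_mono) auto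
      also have "\<dots> \<le> (norm Q1 * (nd * norm D * Km) * Km) * Kp" using Km Kp nD
        by (intro mult_right_mono mult_left_mono) auto
      finally show ?thesis by (simp add: algebra_simps)
    qed
    have n2: "norm Sy \<le> Km * Ktr * (norm D)\<^sup>2"
    proof -
      have "norm Sy = (1/2) * norm (transpose D ** D)" by (simp add: f3)
      also have "\<dots> \<le> norm (transpose D ** D)" by simp
      also have "\<dots> \<le> norm (transpose D) * norm D * Km" using Km by blast
      also have "\<dots> \<le> (norm D * Ktr) * norm D * Km" using Km Ktr by (intro mult_right_mono) auto
      finally show ?thesis by (simp add: power2_eq_square algebra_simps)
    qed
    have n3: "norm (Proj (S0 ** Sy)) \<le> (Kp*Km*norm S0*Km*Ktr) * (norm D)\<^sup>2"
    proof -
      have "norm (Proj (S0 ** Sy)) \<le> norm (S0 ** Sy) * Kp" using Kp by blast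
      also have "\<dots> \<le> (norm S0 * norm Sy * Km) * Kp" using Km Kp by (intro mult_right_mono) auto
      also have "\<dots> \<le> (norm S0 * (Km * Ktr * (norm D)\<^sup>2) * Km) * Kp" using Km Kp n2
        by (intro mult_right_mono mult_left_mono) auto
      finally show ?thesis by (simp add: algebra_simps)
    qed
    have n4: "norm (Proj (S0 ** (X - t *\<^sub>R Y))) \<le> K1 * (\<bar>t\<bar> * norm D + (norm D)\<^sup>2)"
    proof -
      have "norm (Proj (S0 ** (X - t *\<^sub>R Y))) \<le> norm (t *\<^sub>R Proj (Q1 ** (Th0 ** D))) + norm (Proj (S0 ** Sy))"
        unfolding f8 by (metis norm_minus_cancel norm_triangle_ineq4 diff_conv_add_uminus)
      also have "norm (t *\<^sub>R Proj (Q1 ** (Th0 ** D))) \<le> \<bar>t\<bar> * ((Kp*Km*Km*norm Q1*nd) * norm D)"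
        using n1 by (simp add: mult_left_mono)
      also have "\<bar>t\<bar> * ((Kp*Km*Km*norm Q1*nd) * norm D) + norm (Proj (S0 ** Sy))
          \<le> (Kp*Km*Km*norm Q1*nd) * (\<bar>t\<bar> * norm D) + (Kp*Km*norm S0*Km*Ktr) * (norm D)\<^sup>2"
        using n3 by (simp add: algebra_simps)
      also have "\<dots> \<le> K1 * (\<bar>t\<bar> * norm D + (norm D)\<^sup>2)"
      proof -
        have a: "0 \<le> Kp*Km*Km*norm Q1*nd" "0 \<le> Kp*Km*norm S0*Km*Ktr" using Km Kp Ktr by (simp_all add: nd_def)
        have "(Kp*Km*Km*norm Q1*nd) * (\<bar>t\<bar> * norm D) \<le> K1 * (\<bar>t\<bar> * norm D)"
          using a by (intro mult_right_mono) (auto simp: K1_def)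
        moreover have "(Kp*Km*norm S0*Km*Ktr) * (norm D)\<^sup>2 \<le> K1 * (norm D)\<^sup>2"
          using a by (intro mult_right_mono) (auto simp: K1_def)
        ultimately show ?thesis by (simp add: distrib_left)
      qed
      finally show ?thesis by simp
    qed
    have XY: "X - t *\<^sub>R Y \<in> so" using Proj_so[of D] Y by (simp add: X_def so_def tr_diff tr_scale)
    have n5: "c * norm (X - t *\<^sub>R Y) \<le> K1 * (\<bar>t\<bar> * norm D + (norm D)\<^sup>2)"
      using cb XY n4 unfolding S0_def by (meson order_trans)
    have n5': "norm (X - t *\<^sub>R Y) \<le> (K1 / c) * (\<bar>t\<bar> * norm D + (norm D)\<^sup>2)"
      using n5 c by (simp add: field_simps mult.commute)
    have "D - t *\<^sub>R Y = (X - t *\<^sub>R Y) + Sy" by (simp add: Sy_def)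
    hence "norm (D - t *\<^sub>R Y) \<le> norm (X - t *\<^sub>R Y) + norm Sy" by (metis norm_triangle_ineq)
    also have "\<dots> \<le> (K1 / c) * (\<bar>t\<bar> * norm D + (norm D)\<^sup>2) + Km * Ktr * (norm D)\<^sup>2"
      using n5' n2 by simp
    also have "\<dots> \<le> K2 * (\<bar>t\<bar> * norm D + (norm D)\<^sup>2)"
    proof -
      have p: "0 \<le> \<bar>t\<bar> * norm D + (norm D)\<^sup>2" by simp
      have "Km * Ktr * (norm D)\<^sup>2 \<le> (Km * Ktr + 1) * (\<bar>t\<bar> * norm D + (norm D)\<^sup>2)"
        using Km Ktr by (intro mult_mono) auto
      thus ?thesis by (simp add: K2_def distrib_right)
    qed
    finally show "norm ((transpose Th0 ** Tht - mat 1) - t *\<^sub>R Y)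
        \<le> K2 * (\<bar>t\<bar> * norm (transpose Th0 ** Tht - mat 1) + (norm (transpose Th0 ** Tht - mat 1))\<^sup>2)"
      by (simp add: D_def)
  qed
  with K2 show ?thesis by blast
qed

lemma real_est:
  fixes K2 d a y r :: real
  assumes K2: "K2 > 0" and d: "d \<ge> 0" and a: "a \<ge> 0" and y: "y \<ge> 0"
    and h1: "d \<le> a * y + r" and hr: "r \<le> K2 * (a * d + d\<^sup>2)"
    and ha: "K2 * a \<le> 1/4" and hd: "K2 * d \<le> 1/4"
  shows "r \<le> K2 * (2 * y + 4 * y\<^sup>2) * a\<^sup>2"
proof -
  have "(K2 * a) * d \<le> (1/4) * d" using ha d by (rule mult_right_mono)
  moreover have "(K2 * d) * d \<le> (1/4) * d" using hd d by (rule mult_right_mono)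
  ultimately have "K2 * (a * d + d\<^sup>2) \<le> d / 2" by (simp add: power2_eq_square algebra_simps)
  hence "d \<le> 2 * a * y" using h1 hr by linarith
  hence "a * d \<le> a * (2 * a * y)" and "d\<^sup>2 \<le> (2 * a * y)\<^sup>2"
    using a d by (auto intro: mult_left_mono power_mono)
  hence "a * d + d\<^sup>2 \<le> (2 * y + 4 * y\<^sup>2) * a\<^sup>2" by (simp add: power2_eq_square algebra_simps)
  hence "K2 * (a * d + d\<^sup>2) \<le> K2 * ((2 * y + 4 * y\<^sup>2) * a\<^sup>2)" using K2 by (intro mult_left_mono) auto
  thus ?thesis using hr by (simp add: mult.assoc)
qed

lemma deriv_abs:
  fixes Th :: "real \<Rightarrow> real^'d^'d" and Q0 Q1 :: "real^'d^'d" and T :: "real set"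
  assumes T0: "0 \<in> T" and SOt: "\<forall>t\<in>T. Th t \<in> SO"
    and mx: "\<forall>t\<in>T. \<forall>R\<in>SO. trace (R ** (Q0 + t *\<^sub>R Q1)) \<le> trace (Th t ** (Q0 + t *\<^sub>R Q1))"
    and un: "\<forall>R\<in>SO. trace (R ** Q0) = trace (Th 0 ** Q0) \<longrightarrow> R = Th 0"
  shows "bij_betw (Lmap (Q0 ** Th 0)) so so \<and>
    (Th has_vector_derivative (Th 0 ** inv_into so (Lmap (Q0 ** Th 0)) (- Proj (Q1 ** Th 0))))
      (at 0 within T)"
proof -
  define Th0 where "Th0 = Th 0"
  have Th0: "Th0 \<in> SO" using SOt T0 by (simp add: Th0_def)
  have "\<forall>R\<in>SO. trace (R ** (Q0 + 0 *\<^sub>R Q1)) \<le> trace (Th 0 ** (Q0 + 0 *\<^sub>R Q1))"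
    using mx T0 by blast
  hence mx0: "\<forall>R\<in>SO. trace (R ** Q0) \<le> trace (Th0 ** Q0)" by (simp add: Th0_def)
  have St: "transpose (Q0 ** Th0) = Q0 ** Th0" by (rule fo_max[OF Th0 mx0])
  have U: "\<forall>M\<in>SO. trace (M ** (Q0 ** Th0)) = trace (Q0 ** Th0) \<longrightarrow> M = mat 1"
    by (rule uniq_transf[OF Th0]) (simp add: un Th0_def)
  have Lm: "Lmap (Q0 ** Th0) = (\<lambda>X. Proj ((Q0 ** Th0) ** X))" by (rule ext) (simp add: Lmap_def)
  have bij: "bij_betw (Lmap (Q0 ** Th0)) so so" unfolding Lm by (rule L_bij(1)[OF St U])
  obtain c where c: "c > 0" "\<forall>X\<in>so. c * norm X \<le> norm (Proj ((Q0 ** Th0) ** X))"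
    using L_bij(2)[OF St U] by blast
  define P where "P = - Proj (Q1 ** Th0)"
  have P: "P \<in> so" by (simp add: P_def so_neg Proj_so)
  define Y where "Y = inv_into so (Lmap (Q0 ** Th0)) P"
  have Y: "Y \<in> so" using bij_betw_apply[OF bij_betw_inv_into[OF bij] P] by (simp add: Y_def)
  have LY: "Proj ((Q0 ** Th0) ** Y) = - Proj (Q1 ** Th0)"
    using bij_betw_inv_into_right[OF bij P] by (simp add: Y_def Lm P_def)
  have symt: "\<forall>t\<in>T. transpose ((Q0 + t *\<^sub>R Q1) ** Th t) = (Q0 + t *\<^sub>R Q1) ** Th t"
    using mx SOt fo_max by blast
  obtain K2 where K2: "K2 > 0" "\<forall>Tht t. Tht \<in> SO \<longrightarrow>
      transpose ((Q0 + t *\<^sub>R Q1) ** Tht) = (Q0 + t *\<^sub>R Q1) ** Tht \<longrightarrow>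
      norm ((transpose Th0 ** Tht - mat 1) - t *\<^sub>R Y)
        \<le> K2 * (\<bar>t\<bar> * norm (transpose Th0 ** Tht - mat 1) + (norm (transpose Th0 ** Tht - mat 1))\<^sup>2)"
    using key_est[OF Th0 St Y LY c] by blast
  obtain Km where Km: "Km > 0" "\<forall>(A::real^'d^'d) (B::real^'d^'d). norm (A ** B) \<le> norm A * norm B * Km"
    using mult_bound by blast
  define nd where "nd = sqrt (real CARD('d))"
  have nd: "nd > 0" by (simp add: nd_def)
  define \<eta> where "\<eta> = 1 / (4 * K2)"
  have \<eta>: "\<eta> > 0" using K2 by (simp add: \<eta>_def)
  obtain \<delta>1 where \<delta>1: "\<delta>1 > 0" "\<forall>t\<in>T. \<bar>t\<bar> < \<delta>1 \<longrightarrow> norm (Th t - Th 0) < \<eta> / (Km * nd)"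
    using cont_abs[OF T0 SOt mx un, of "\<eta> / (Km * nd)"] \<eta> Km nd by auto
  define K3 where "K3 = Km * nd * (K2 * (2 * norm Y + 4 * (norm Y)\<^sup>2))"
  have K3: "K3 \<ge> 0" using Km nd K2 by (simp add: K3_def)
  define V where "V = Th0 ** Y"
  have est: "norm (Th t - Th0 - t *\<^sub>R V) \<le> K3 * t\<^sup>2" if t: "t \<in> T" "\<bar>t\<bar> < \<delta>1" "\<bar>t\<bar> < \<eta>" for t
  proof -
    define D where "D = transpose Th0 ** Th t - mat 1"
    have Tht: "Th t \<in> SO" using SOt t by blast
    have f1: "Th t = Th0 ** (mat 1 + D)"
      by (simp add: D_def matrix_mul_assoc SO_At[OF Th0])
    have "D = transpose Th0 ** (Th t - Th0)"
      by (simp add: D_def matrix_diff_ldistrib' SO_tA[OF Th0])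
    hence "norm D \<le> norm (transpose Th0) * norm (Th t - Th0) * Km" using Km(2) by simp
    also have "\<dots> = nd * Km * norm (Th t - Th0)" using SO_norm[OF SO_transpose[OF Th0]] by (simp add: nd_def)
    also have "\<dots> \<le> nd * Km * (\<eta> / (Km * nd))" using \<delta>1 t nd Km
      by (intro mult_left_mono) (auto simp: Th0_def less_imp_le)
    also have "\<dots> = \<eta>" using nd Km by simp
    finally have nDe: "norm D \<le> \<eta>" .
    have key: "norm (D - t *\<^sub>R Y) \<le> K2 * (\<bar>t\<bar> * norm D + (norm D)\<^sup>2)"
      using K2(2) Tht symt t unfolding D_def by blast
    have h1: "norm D \<le> \<bar>t\<bar> * norm Y + norm (D - t *\<^sub>R Y)"
    proof -
      have "norm D = norm (t *\<^sub>R Y + (D - t *\<^sub>R Y))" by simp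
      also have "\<dots> \<le> norm (t *\<^sub>R Y) + norm (D - t *\<^sub>R Y)" by (rule norm_triangle_ineq)
      finally show ?thesis by simp
    qed
    have ha: "K2 * \<bar>t\<bar> \<le> 1/4" using t K2 by (simp add: \<eta>_def field_simps)
    have hd: "K2 * norm D \<le> 1/4" using nDe K2 by (simp add: \<eta>_def field_simps)
    have r: "norm (D - t *\<^sub>R Y) \<le> K2 * (2 * norm Y + 4 * (norm Y)\<^sup>2) * \<bar>t\<bar>\<^sup>2"
      by (rule real_est[OF K2(1) norm_ge_zero abs_ge_zero norm_ge_zero h1 key ha hd])
    have "Th t - Th0 - t *\<^sub>R V = Th0 ** (D - t *\<^sub>R Y)"
      by (simp add: f1 V_def matrix_add_ldistrib matrix_diff_ldistrib' matrix_scale_r)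
    hence "norm (Th t - Th0 - t *\<^sub>R V) \<le> norm Th0 * norm (D - t *\<^sub>R Y) * Km" using Km(2) by simp
    also have "\<dots> = nd * Km * norm (D - t *\<^sub>R Y)" using SO_norm[OF Th0] by (simp add: nd_def)
    also have "\<dots> \<le> nd * Km * (K2 * (2 * norm Y + 4 * (norm Y)\<^sup>2) * \<bar>t\<bar>\<^sup>2)"
      using r nd Km by (intro mult_left_mono) auto
    also have "\<dots> = K3 * t\<^sup>2" by (simp add: K3_def)
    finally show ?thesis .
  qed
  have "(Th has_derivative (\<lambda>x. x *\<^sub>R V)) (at 0 within T)"
    unfolding has_derivative_within_alt
  proof (intro conjI allI impI bounded_linear_scaleR_left)
    fix e :: real assume e: "e > 0"
    define d where "d = min (min \<delta>1 \<eta>) (e / (K3 + 1))"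
    have d: "d > 0" using \<delta>1 \<eta> e K3 by (simp add: d_def)
    show "\<exists>d>0. \<forall>y\<in>T. norm (y - 0) < d \<longrightarrow> norm (Th y - Th 0 - (y - 0) *\<^sub>R V) \<le> e * norm (y - 0)"
    proof (intro exI[of _ d] conjI ballI impI d)
      fix t assume t: "t \<in> T" "norm (t - 0) < d"
      have t': "\<bar>t\<bar> < \<delta>1" "\<bar>t\<bar> < \<eta>" "\<bar>t\<bar> < e / (K3 + 1)" using t by (auto simp: d_def)
      have "norm (Th t - Th0 - t *\<^sub>R V) \<le> K3 * t\<^sup>2" using est t t' by blast
      also have "K3 * t\<^sup>2 = (K3 * \<bar>t\<bar>) * \<bar>t\<bar>" by (simp add: power2_eq_square abs_mult_self_eq)
      also have "\<dots> \<le> e * \<bar>t\<bar>"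
      proof (rule mult_right_mono)
        have "K3 * \<bar>t\<bar> \<le> K3 * (e / (K3 + 1))" using K3 t' by (intro mult_left_mono) auto
        also have "\<dots> \<le> e" using K3 e by (simp add: field_simps)
        finally show "K3 * \<bar>t\<bar> \<le> e" .
      qed simp
      finally show "norm (Th t - Th 0 - (t - 0) *\<^sub>R V) \<le> e * norm (t - 0)" by (simp add: Th0_def)
    qed
  qed
  hence "(Th has_vector_derivative V) (at 0 within T)" by (simp add: has_vector_derivative_def)
  thus ?thesis using bij by (simp add: V_def Y_def P_def Th0_def)
qed

lemma norm_sq_vec: "(norm (v::real^'d^'n))\<^sup>2 = (\<Sum>i\<in>UNIV. (norm (v$i))\<^sup>2)"
  by (simp add: norm_vec_def L2_set_def sum_nonneg)

lemma norm_diff_sq: "(norm ((a::real^'d) - b))\<^sup>2 = (norm a)\<^sup>2 - 2 * (a \<bullet> b) + (norm b)\<^sup>2"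
  by (simp add: power2_norm_eq_inner inner_diff_left inner_diff_right inner_commute)

lemma orth_norm: "orthogonal_matrix R \<Longrightarrow> norm ((R::real^'d^'d) *v v) = norm v"
proof -
  assume "orthogonal_matrix R"
  hence "orthogonal_transformation ((*v) R)"
    using orthogonal_transformation_matrix[of "(*v) R"] by (simp add: matrix_of_matrix_vector_mul)
  thus ?thesis by (rule orthogonal_transformation_norm)
qed

lemma trace_Qm: "trace ((R::real^'d^'d) ** Qm z y) = (\<Sum>i\<in>UNIV. (y$i) \<bullet> (R *v z$i))"
proof -
  have "trace (R ** Qm z y) = (\<Sum>a\<in>UNIV. \<Sum>b\<in>UNIV. \<Sum>i\<in>UNIV. R$a$b * (z$i$b * y$i$a))"
    by (simp add: trace_def matrix_matrix_mult_def Qm_def outer_def sum_component sum_distrib_left)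
  also have "\<dots> = (\<Sum>a\<in>UNIV. \<Sum>i\<in>UNIV. \<Sum>b\<in>UNIV. R$a$b * (z$i$b * y$i$a))"
    by (rule sum.cong[OF refl], rule sum.swap)
  also have "\<dots> = (\<Sum>i\<in>UNIV. \<Sum>a\<in>UNIV. \<Sum>b\<in>UNIV. R$a$b * (z$i$b * y$i$a))"
    by (rule sum.swap)
  also have "\<dots> = (\<Sum>i\<in>UNIV. (y$i) \<bullet> (R *v z$i))"
    by (simp add: inner_vec_def matrix_vector_mult_def sum_distrib_left mult_ac)
  finally show ?thesis .
qed

lemma dist_formula:
  fixes z y :: "real^'d^'n" and R :: "real^'d^'d"
  assumes R: "orthogonal_matrix R" and c: "centered z"
  shows "(dist y (phi R \<eta> z))\<^sup>2 = (\<Sum>i\<in>UNIV. (norm (y$i - \<eta>))\<^sup>2) + (\<Sum>i\<in>UNIV. (norm (z$i))\<^sup>2) - 2 * trace (R ** Qm z y)"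
proof -
  have "(dist y (phi R \<eta> z))\<^sup>2 = (\<Sum>i\<in>UNIV. (norm ((y$i - \<eta>) - R *v z$i))\<^sup>2)"
    by (simp add: dist_norm norm_sq_vec phi_def algebra_simps)
  also have "\<dots> = (\<Sum>i\<in>UNIV. (norm (y$i - \<eta>))\<^sup>2 - 2 * ((y$i - \<eta>) \<bullet> (R *v z$i)) + (norm (z$i))\<^sup>2)"
    by (simp add: norm_diff_sq orth_norm[OF R])
  also have "\<dots> = (\<Sum>i\<in>UNIV. (norm (y$i - \<eta>))\<^sup>2) - 2 * (\<Sum>i\<in>UNIV. (y$i - \<eta>) \<bullet> (R *v z$i)) + (\<Sum>i\<in>UNIV. (norm (z$i))\<^sup>2)"
    by (simp add: sum.distrib sum_subtractf sum_distrib_left)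
  also have "(\<Sum>i\<in>UNIV. (y$i - \<eta>) \<bullet> (R *v z$i)) = trace (R ** Qm z y) - \<eta> \<bullet> (R *v (\<Sum>i\<in>UNIV. z$i))"
    by (simp add: trace_Qm inner_diff_left sum_subtractf inner_sum_right vec.sum)
  also have "(\<Sum>i\<in>UNIV. z$i) = 0" using c by (simp add: centered_def)
  finally show ?thesis by simp
qed

lemma opt_prop:
  fixes z y :: "real^'d^'n" and cbar :: real
  assumes c: "centered z"
    and tw: "\<forall>R1\<in>SO. \<forall>R2\<in>SO. \<forall>\<eta>1 \<eta>2. phi R1 \<eta>1 z = phi R2 \<eta>2 z \<longrightarrow> R1 = R2"
    and cb: "cbar_ok z cbar" and y: "y \<in> zdom z cbar"
  shows "theta z y \<in> SO \<and> (\<forall>R\<in>SO. trace (R ** Qm z y) \<le> trace (theta z y ** Qm z y)) \<and>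
     (\<forall>R\<in>SO. trace (R ** Qm z y) = trace (theta z y ** Qm z y) \<longrightarrow> R = theta z y)"
proof -
  let ?P = "\<lambda>w. w \<in> Mfd z \<and> (\<forall>w'\<in>Mfd z. dist y w \<le> dist y w')"
  have ex1: "\<exists>!w. ?P w" using cb y by (simp add: cbar_ok_def)
  have Pz: "?P (zmin z y)" unfolding zmin_def by (rule theI'[OF ex1])
  then obtain R \<eta> where R: "R \<in> SO" and zR: "zmin z y = phi R \<eta> z" by (auto simp: Mfd_def)
  have th: "theta z y = R" unfolding theta_def
  proof (rule the_equality)
    show "R \<in> SO \<and> (\<exists>\<eta>. zmin z y = phi R \<eta> z)" using R zR by blast
    fix R' assume "R' \<in> SO \<and> (\<exists>\<eta>. zmin z y = phi R' \<eta> z)"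
    thus "R' = R" using tw R zR by metis
  qed
  have df: "(dist y (phi R' \<eta> z))\<^sup>2 = (\<Sum>i\<in>UNIV. (norm (y$i - \<eta>))\<^sup>2) + (\<Sum>i\<in>UNIV. (norm (z$i))\<^sup>2) - 2 * trace (R' ** Qm z y)"
    if "R' \<in> SO" for R' :: "real^'d^'d"
    using dist_formula[OF _ c] that by (simp add: SO_def)
  have mem: "phi R' \<eta> z \<in> Mfd z" if "R' \<in> SO" for R' :: "real^'d^'d" using that by (auto simp: Mfd_def)
  have mx: "\<forall>R'\<in>SO. trace (R' ** Qm z y) \<le> trace (R ** Qm z y)"
  proof
    fix R' :: "real^'d^'d" assume R': "R' \<in> SO"
    have "dist y (phi R \<eta> z) \<le> dist y (phi R' \<eta> z)" using Pz zR mem[OF R'] by auto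
    hence "(dist y (phi R \<eta> z))\<^sup>2 \<le> (dist y (phi R' \<eta> z))\<^sup>2" by (simp add: power_mono)
    thus "trace (R' ** Qm z y) \<le> trace (R ** Qm z y)" using df[OF R] df[OF R'] by simp
  qed
  have un: "\<forall>R'\<in>SO. trace (R' ** Qm z y) = trace (R ** Qm z y) \<longrightarrow> R' = R"
  proof (intro ballI impI)
    fix R' :: "real^'d^'d" assume R': "R' \<in> SO" and e: "trace (R' ** Qm z y) = trace (R ** Qm z y)"
    have "(dist y (phi R' \<eta> z))\<^sup>2 = (dist y (phi R \<eta> z))\<^sup>2" using df[OF R] df[OF R'] e by simp
    hence de: "dist y (phi R' \<eta> z) = dist y (phi R \<eta> z)" by (simp add: power2_eq_iff_nonneg)
    have "?P (phi R' \<eta> z)" using Pz zR mem[OF R'] de by auto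
    hence "phi R' \<eta> z = zmin z y" using ex1 Pz by blast
    thus "R' = R" using tw R R' zR by metis
  qed
  show ?thesis using R mx un th by simp
qed

lemma outer_add: "outer u (v + w) = outer u v + outer u w"
  by (simp add: outer_def vec_eq_iff algebra_simps)
lemma outer_scale: "outer u ((c::real) *\<^sub>R v) = c *\<^sub>R outer u v"
  by (simp add: outer_def vec_eq_iff)
lemma outer_zero: "outer u 0 = 0"
  by (simp add: outer_def vec_eq_iff)

lemma Qm_line: "Qm z (x + t *\<^sub>R Edir i \<gamma>) = Qm z x + t *\<^sub>R outer (z$i) (axis \<gamma> 1)"
proof -
  have "Qm z (x + t *\<^sub>R Edir i \<gamma>) = (\<Sum>j\<in>UNIV. outer (z$j) (x$j) + t *\<^sub>R (if j = i then outer (z$j) (axis \<gamma> 1) else 0))"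
    unfolding Qm_def by (intro sum.cong refl) (simp add: Qm_def Edir_def outer_add outer_scale outer_zero)
  also have "\<dots> = (\<Sum>j\<in>UNIV. outer (z$j) (x$j)) + t *\<^sub>R (\<Sum>j\<in>UNIV. if j = i then outer (z$j) (axis \<gamma> 1) else 0)"
    by (simp only: sum.distrib scaleR_sum_right)
  also have "(\<Sum>j\<in>UNIV. if j = i then outer (z$j) (axis \<gamma> 1) else 0) = outer (z$i) (axis \<gamma> 1)"
    by simp
  finally show ?thesis by (simp add: Qm_def)
qed

lemma outer_mult: "outer u v ** (A::real^'d^'d) = outer u (transpose A *v v)"
proof -
  have "(outer u v ** A)$a$b = (outer u (transpose A *v v))$a$b" for a b
  proof -
    have "(outer u v ** A)$a$b = (\<Sum>k\<in>UNIV. u$a * v$k * A$k$b)"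
      by (simp add: outer_def matrix_matrix_mult_def)
    also have "\<dots> = u$a * (\<Sum>k\<in>UNIV. A$k$b * v$k)"
      by (simp add: sum_distrib_left algebra_simps)
    also have "\<dots> = (outer u (transpose A *v v))$a$b"
      by (simp add: outer_def matrix_vector_mult_def transpose_def)
    finally show ?thesis .
  qed
  thus ?thesis by (simp add: vec_eq_iff)
qed

lemma transpose_outer: "transpose (outer u v) = outer v u"
  by (simp add: outer_def transpose_def vec_eq_iff)

lemma minv_SO: "A \<in> SO \<Longrightarrow> matrix_inv (A::real^'d^'d) = transpose A"
proof -
  assume A: "A \<in> SO"
  have "invertible A" using SO_tA[OF A] SO_At[OF A] by (auto simp: invertible_def)
  hence "A ** matrix_inv A = mat 1" by (rule minv_works)
  hence "transpose A ** (A ** matrix_inv A) = transpose A" by simp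
  thus ?thesis by (simp add: matrix_mul_assoc SO_tA[OF A])
qed

lemma P_rel: "A \<in> SO \<Longrightarrow> Proj (outer (matrix_inv A *v e) u) = - Proj (outer u e ** (A::real^'d^'d))"
proof -
  assume A: "A \<in> SO"
  have "outer (matrix_inv A *v e) u = transpose (outer u (transpose A *v e))"
    by (simp add: minv_SO[OF A] transpose_outer)
  hence "Proj (outer (matrix_inv A *v e) u) = - Proj (outer u (transpose A *v e))"
    by (simp add: Proj_transpose)
  thus ?thesis by (simp add: outer_mult)
qed


theorem proposition4p2:
  fixes U :: "real \<Rightarrow> real" and a b cbar :: real
    and z x :: "real^'d^'n" and i :: 'n and \<gamma> :: 'd
  assumes U: "C3_0 U" and U_even: "\<forall>r. U (- r) = U r"
    and a_pos: "a > 0" and a_min: "\<forall>r\<ge>0. U a \<le> U r"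
    and a_unique: "\<forall>r>0. U r = U a \<longrightarrow> r = a"
    and U2: "deriv (deriv U) a > 0"
    and b_def: "b = Inf {r. r > 0 \<and> (\<forall>s>r. U s = 0)}"
    and cryst: "crystal a b z" and cent: "centered z" and rigid: "inf_rigid a z"
    and theta_welldef: "\<forall>R1\<in>SO. \<forall>R2\<in>SO. \<forall>\<eta>1 \<eta>2. phi R1 \<eta>1 z = phi R2 \<eta>2 z \<longrightarrow> R1 = R2"
    and cbar: "cbar_ok z cbar"
    and x: "x \<in> Minf z cbar cbar"
  shows "bij_betw (Lmap (Qm z x ** theta z x)) so so \<and>
    ((\<lambda>t. theta z (x + t *\<^sub>R Edir i \<gamma>)) has_vector_derivative
       (theta z x ** inv_into so (Lmap (Qm z x ** theta z x))
          (Proj (outer (matrix_inv (theta z x) *v axis \<gamma> 1) (z$i)))))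
     (at 0 within {t. x + t *\<^sub>R Edir i \<gamma> \<in> zdom z cbar})"
proof -
  define T where "T = {t. x + t *\<^sub>R Edir i \<gamma> \<in> zdom z cbar}"
  define Th where "Th = (\<lambda>t. theta z (x + t *\<^sub>R Edir i \<gamma>))"
  define Q0 where "Q0 = Qm z x"
  define Q1 where "Q1 = outer (z$i) (axis \<gamma> 1)"
  have xz: "x \<in> zdom z cbar" using x by (simp add: Minf_def)
  have T0: "0 \<in> T" using xz by (simp add: T_def)
  have op: "Th t \<in> SO \<and> (\<forall>R\<in>SO. trace (R ** (Q0 + t *\<^sub>R Q1)) \<le> trace (Th t ** (Q0 + t *\<^sub>R Q1)))"
    if "t \<in> T" for t
  proof -
    have "x + t *\<^sub>R Edir i \<gamma> \<in> zdom z cbar" using that by (simp add: T_def)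
    from opt_prop[OF cent theta_welldef cbar this]
    show ?thesis by (simp add: Th_def Q0_def Q1_def Qm_line)
  qed
  have SOt: "\<forall>t\<in>T. Th t \<in> SO" using op by blast
  have mx: "\<forall>t\<in>T. \<forall>R\<in>SO. trace (R ** (Q0 + t *\<^sub>R Q1)) \<le> trace (Th t ** (Q0 + t *\<^sub>R Q1))"
    using op by blast
  have Th0: "Th 0 = theta z x" by (simp add: Th_def)
  have un: "\<forall>R\<in>SO. trace (R ** Q0) = trace (Th 0 ** Q0) \<longrightarrow> R = Th 0"
    using opt_prop[OF cent theta_welldef cbar xz] by (simp add: Th0 Q0_def)
  have thSO: "theta z x \<in> SO" using SOt T0 Th0 by metis
  have main: "bij_betw (Lmap (Q0 ** Th 0)) so so \<and>
    (Th has_vector_derivative (Th 0 ** inv_into so (Lmap (Q0 ** Th 0)) (- Proj (Q1 ** Th 0))))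
      (at 0 within T)"
    by (rule deriv_abs[OF T0 SOt mx un])
  have P: "Proj (outer (matrix_inv (theta z x) *v axis \<gamma> 1) (z$i)) = - Proj (Q1 ** theta z x)"
    unfolding Q1_def by (rule P_rel[OF thSO])
  show ?thesis using main unfolding Th0 P by (simp add: Th_def T_def Q0_def)
qed

end
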